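(* Let $n$ be a positive integer, let $\mathcal F$ be an $\mathcal N$-saturated family of subsets of $[n]$, and let $\mathcal G$ be a component of $\mathcal F$. Let $B_1,\dots,B_l$ be the minimal elements and $A_1,\dots,A_k$ the maximal elements of $\mathcal G$. Let $M\in\mathcal F$ be such that $\bigcup_{i=1}^l B_i\subseteq M\subseteq\bigcap_{i=1}^k A_i$, and such that $M$ is minimal (with respect to inclusion) among the sets of $\mathcal F$ with this property. Then every $X\in\mathcal G$ is comparable to $M$.
   Context: The poset $\mathcal N$ has four elements $a,b,c,d$ with $a<c$, $b<c$, $b<d$ and no other comparabilities. A family $\mathcal Q$ of sets (ordered by inclusion) contains an induced copy of $\mathcal N$ if there are distinct sets in $\mathcal Q$ whose inclusion relations are exactly those of $a,b,c,d$ above. A family $\mathcal F$ of subsets of $[n]=\{1,\dots,n\}$ is $\mathcal N$-saturated if $\mathcal F$ contains no induced copy of $\mathcal N$, but for every $S\subseteq[n]$ with $S\notin\mathcal F$, the family $\mathcal F\cup\{S\}$ contains an induced copy of $\mathcal N$. A component of $\mathcal F$ is the vertex set of a connected component of the Hasse diagram (as a graph) of the poset $(\mathcal F\setminus\{\emptyset,[n]\},\subseteq)$; its minimal and maximal elements are taken with respect to inclusion within the component. *)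

theory Defs
  imports Main
begin

definition induced_N :: "nat set set \<Rightarrow> bool" where
  "induced_N Q \<longleftrightarrow> (\<exists>a\<in>Q. \<exists>b\<in>Q. \<exists>c\<in>Q. \<exists>d\<in>Q.
      distinct [a, b, c, d] \<and>
      a \<subset> c \<and> b \<subset> c \<and> b \<subset> d \<and>
      \<not> a \<subseteq> b \<and> \<not> b \<subseteq> a \<and>
      \<not> a \<subseteq> d \<and> \<not> d \<subseteq> a \<and>
      \<not> c \<subseteq> d \<and> \<not> d \<subseteq> c)"

definition N_saturated :: "nat \<Rightarrow> nat set set \<Rightarrow> bool" where
  "N_saturated n F \<longleftrightarrow> F \<subseteq> Pow {1..n} \<and> \<not> induced_N F \<and>
     (\<forall>S. S \<subseteq> {1..n} \<longrightarrow> S \<notin> F \<longrightarrow> induced_N (F \<union> {S}))"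

definition inner_part :: "nat \<Rightarrow> nat set set \<Rightarrow> nat set set" where
  "inner_part n F = F - {{}, {1..n}}"

definition covers :: "nat set set \<Rightarrow> nat set \<Rightarrow> nat set \<Rightarrow> bool" where
  "covers P X Y \<longleftrightarrow> X \<in> P \<and> Y \<in> P \<and> X \<subset> Y \<and> \<not> (\<exists>Z\<in>P. X \<subset> Z \<and> Z \<subset> Y)"

definition hasse_adj :: "nat set set \<Rightarrow> nat set \<Rightarrow> nat set \<Rightarrow> bool" where
  "hasse_adj P X Y \<longleftrightarrow> covers P X Y \<or> covers P Y X"

definition is_component :: "nat \<Rightarrow> nat set set \<Rightarrow> nat set set \<Rightarrow> bool" where
  "is_component n F G \<longleftrightarrow> (\<exists>X\<in>inner_part n F.
     G = {Y. Y \<in> inner_part n F \<and> (hasse_adj (inner_part n F))\<^sup>*\<^sup>* X Y})"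

definition minimal_elems :: "nat set set \<Rightarrow> nat set set" where
  "minimal_elems G = {B\<in>G. \<not> (\<exists>B'\<in>G. B' \<subset> B)}"

definition maximal_elems :: "nat set set \<Rightarrow> nat set set" where
  "maximal_elems G = {A\<in>G. \<not> (\<exists>A'\<in>G. A \<subset> A')}"

end

theory Submission
  imports Defs
begin

lemma noN:
  assumes "\<not> induced_N F" "a\<in>F" "b\<in>F" "c\<in>F" "d\<in>F" "a \<subset> c" "b \<subset> c" "b \<subset> d"
    "\<not> a \<subseteq> b" "\<not> b \<subseteq> a" "\<not> a \<subseteq> d" "\<not> d \<subseteq> a" "\<not> c \<subseteq> d" "\<not> d \<subseteq> c"
  shows False
proof -
  have "distinct [a, b, c, d]" using assms(6-) by auto
  then have "induced_N F" unfolding induced_N_def using assms(2-) by blast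
  then show False using assms(1) by blast
qed

lemma hasse_sym: "(hasse_adj P)\<^sup>*\<^sup>* x y \<Longrightarrow> (hasse_adj P)\<^sup>*\<^sup>* y x"
proof (induction rule: rtranclp.induct)
  case (rtrancl_refl a)
  then show ?case by simp
next
  case (rtrancl_into_rtrancl a b c)
  have "hasse_adj P c b" using rtrancl_into_rtrancl(2) unfolding hasse_adj_def by blast
  then show ?case using rtrancl_into_rtrancl(3)
    by (meson converse_rtranclp_into_rtranclp)
qed

lemma hasse_chain:
  assumes fin: "finite P" and finZ: "finite Z" and "W \<in> P" "Z \<in> P" "W \<subseteq> Z"
  shows "(hasse_adj P)\<^sup>*\<^sup>* W Z"
  using assms(3-)
proof (induction "card (Z - W)" arbitrary: W rule: less_induct)
  case less
  show ?case
  proof (cases "W = Z")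
    case True then show ?thesis by simp
  next
    case False
    let ?A = "{V\<in>P. W \<subset> V \<and> V \<subseteq> Z}"
    have ZA: "Z \<in> ?A" using less False by auto
    have "finite ?A" using fin by simp
    then obtain V where V: "V \<in> ?A" "\<forall>x\<in>?A. x \<le> V \<longrightarrow> V = x"
      using finite_has_minimal2[OF _ ZA] by blast
    have VP: "V \<in> P" and WV: "W \<subset> V" and VZ: "V \<subseteq> Z" using V(1) by auto
    have nomid: "\<not> (\<exists>Y\<in>P. W \<subset> Y \<and> Y \<subset> V)"
    proof
      assume "\<exists>Y\<in>P. W \<subset> Y \<and> Y \<subset> V"
      then obtain Y where Y: "Y \<in> P" "W \<subset> Y" "Y \<subset> V" by blast
      then have "Y \<in> ?A" using VZ by auto
      then have "V = Y" using V(2) Y(3) by auto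
      then show False using Y(3) by simp
    qed
    have cov: "covers P W V" unfolding covers_def using VP WV nomid less.prems(1) by simp
    obtain v where "v \<in> V" "v \<notin> W" using WV by blast
    then have "Z - V \<subset> Z - W" using WV VZ by blast
    then have "card (Z - V) < card (Z - W)" using finZ by (meson finite_Diff psubset_card_mono)
    then have "(hasse_adj P)\<^sup>*\<^sup>* V Z" using less.hyps[OF _ VP less.prems(2) VZ] by simp
    moreover have "hasse_adj P W V" using cov unfolding hasse_adj_def by blast
    ultimately show ?thesis by (meson converse_rtranclp_into_rtranclp)
  qed
qed

theorem lemma2p5:
  fixes n :: nat and F G :: "nat set set" and M :: "nat set"
  assumes "n \<ge> 1"
    and "N_saturated n F"
    and "is_component n F G"
    and "M \<in> F"
    and "\<Union> (minimal_elems G) \<subseteq> M" and "M \<subseteq> \<Inter> (maximal_elems G)"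
    and "\<forall>M'\<in>F. \<Union> (minimal_elems G) \<subseteq> M' \<and> M' \<subseteq> \<Inter> (maximal_elems G)
                  \<longrightarrow> \<not> M' \<subset> M"
  shows "\<forall>X\<in>G. X \<subseteq> M \<or> M \<subseteq> X"
proof (rule ccontr)
  assume "\<not> ?thesis"
  then obtain X where X: "X \<in> G" "\<not> X \<subseteq> M" "\<not> M \<subseteq> X" by blast
  define P where "P = inner_part n F"
  have FP: "F \<subseteq> Pow {1..n}" and noNF: "\<not> induced_N F"
    and sat: "\<forall>S. S \<subseteq> {1..n} \<longrightarrow> S \<notin> F \<longrightarrow> induced_N (F \<union> {S})"
    using assms(2) unfolding N_saturated_def by auto
  obtain X0 where X0: "X0 \<in> P" "G = {Y. Y \<in> P \<and> (hasse_adj P)\<^sup>*\<^sup>* X0 Y}"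
    using assms(3) unfolding is_component_def P_def by blast
  have Pdef: "P = F - {{}, {1..n}}" unfolding P_def inner_part_def by simp
  have GP: "G \<subseteq> P" using X0 by blast
  have GF: "G \<subseteq> F" using GP Pdef by blast
  have finF: "finite F" using FP by (meson finite_Pow_iff finite_atLeastAtMost finite_subset)
  have finP: "finite P" using Pdef finF by simp
  have finG: "finite G" using GF finF finite_subset by blast
  have finZ: "\<And>Z. Z \<in> F \<Longrightarrow> finite Z" using FP by (meson PowD finite_atLeastAtMost finite_subset subsetD)
  have conn: "\<And>W Z. W \<in> P \<Longrightarrow> Z \<in> G \<Longrightarrow> W \<subseteq> Z \<or> Z \<subseteq> W \<Longrightarrow> W \<in> G"
  proof -
    fix W Z assume W: "W \<in> P" and Z: "Z \<in> G" and c: "W \<subseteq> Z \<or> Z \<subseteq> W"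
    have ZP: "Z \<in> P" and r: "(hasse_adj P)\<^sup>*\<^sup>* X0 Z" using Z X0 by auto
    have "(hasse_adj P)\<^sup>*\<^sup>* Z W"
    proof (cases "W \<subseteq> Z")
      case True
      then have "(hasse_adj P)\<^sup>*\<^sup>* W Z"
        using hasse_chain[OF finP _ W ZP] finZ ZP Pdef by blast
      then show ?thesis by (rule hasse_sym)
    next
      case False
      then show ?thesis using c hasse_chain[OF finP _ ZP W] finZ W Pdef by blast
    qed
    then show "W \<in> G" using r W X0 by auto
  qed
  have hasmin: "\<And>Z. Z \<in> G \<Longrightarrow> \<exists>B\<in>minimal_elems G. B \<subseteq> Z"
  proof -
    fix Z assume "Z \<in> G"
    then obtain B where "B \<in> G" "B \<le> Z" "\<forall>b\<in>G. b \<le> B \<longrightarrow> B = b"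
      using finite_has_minimal2[OF finG] by blast
    then show "\<exists>B\<in>minimal_elems G. B \<subseteq> Z" unfolding minimal_elems_def by blast
  qed
  have minsub: "\<And>B. B \<in> minimal_elems G \<Longrightarrow> B \<subseteq> M" using assms(5) by blast
  have minG: "\<And>B. B \<in> minimal_elems G \<Longrightarrow> B \<in> G" unfolding minimal_elems_def by blast
  have minmin: "\<And>B W. B \<in> minimal_elems G \<Longrightarrow> W \<in> G \<Longrightarrow> W \<subseteq> B \<Longrightarrow> W = B"
    unfolding minimal_elems_def by blast
  have L2: "\<And>Z. Z \<in> G \<Longrightarrow> \<not> Z \<subseteq> M \<Longrightarrow> \<not> M \<subseteq> Z \<Longrightarrow> \<Union> (minimal_elems G) \<subseteq> Z"
  proof -
    fix Z assume Z: "Z \<in> G" "\<not> Z \<subseteq> M" "\<not> M \<subseteq> Z"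
    obtain B0 where B0: "B0 \<in> minimal_elems G" "B0 \<subseteq> Z" using hasmin Z by blast
    show "\<Union> (minimal_elems G) \<subseteq> Z"
    proof (rule ccontr)
      assume "\<not> \<Union> (minimal_elems G) \<subseteq> Z"
      then obtain B1 where B1: "B1 \<in> minimal_elems G" "\<not> B1 \<subseteq> Z" by blast
      have s0: "B0 \<subseteq> M" "B1 \<subseteq> M" using minsub B0 B1 by auto
      have n01: "\<not> B0 \<subseteq> B1" using minmin[OF B1(1) minG[OF B0(1)]] B0 B1 by blast
      have n10: "\<not> B1 \<subseteq> B0" using B0 B1 by blast
      have p1: "B1 \<subset> M" using s0 n01 by blast
      have p2: "B0 \<subset> M" using s0 B0 Z by blast
      have p3: "B0 \<subset> Z" using s0 B0 Z by blast
      have F1: "B1 \<in> F" "B0 \<in> F" "Z \<in> F" using GF minG B0 B1 Z by auto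
      show False
        by (rule noN[OF noNF F1(1) F1(2) assms(4) F1(3) p1 p2 p3 n10 n01]) (use B1 Z s0 in auto)
    qed
  qed
  have L3: "\<And>W Z. W \<in> G \<Longrightarrow> W \<subset> M \<Longrightarrow> Z \<in> G \<Longrightarrow> \<not> Z \<subseteq> M \<Longrightarrow> \<not> M \<subseteq> Z \<Longrightarrow> W \<subseteq> Z"
  proof -
    fix W Z assume W: "W \<in> G" "W \<subset> M" and Z: "Z \<in> G" "\<not> Z \<subseteq> M" "\<not> M \<subseteq> Z"
    show "W \<subseteq> Z"
    proof (rule ccontr)
      assume nWZ: "\<not> W \<subseteq> Z"
      have "\<exists>B\<in>minimal_elems G. \<not> B \<subseteq> W"
      proof (rule ccontr)
        assume "\<not> (\<exists>B\<in>minimal_elems G. \<not> B \<subseteq> W)"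
        then have "\<Union> (minimal_elems G) \<subseteq> W" by blast
        moreover have "W \<subseteq> \<Inter> (maximal_elems G)" using W assms(6) by blast
        ultimately show False using assms(7) W GF by blast
      qed
      then obtain B where B: "B \<in> minimal_elems G" "\<not> B \<subseteq> W" by blast
      have BZ: "B \<subseteq> Z" using L2[OF Z] B by blast
      have BM: "B \<subseteq> M" using minsub B by blast
      have nWB: "\<not> W \<subseteq> B" using minmin[OF B(1) W(1)] B by blast
      have F1: "W \<in> F" "B \<in> F" "Z \<in> F" using GF minG B W Z by auto
      have BM': "B \<subset> M" using BM BZ Z by blast
      have BZ': "B \<subset> Z" using BM BZ Z by blast
      show False
        by (rule noN[OF noNF F1(1) F1(2) assms(4) F1(3) W(2) BM' BZ' nWB B(2) nWZ]) (use W Z in auto)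
    qed
  qed
  define I where "I = {Z\<in>G. \<not> Z \<subseteq> M \<and> \<not> M \<subseteq> Z}"
  define S where "S = M \<inter> \<Inter> I"
  have XI: "X \<in> I" using X I_def by blast
  have SX: "S \<subseteq> X" using XI S_def by blast
  have SM: "S \<subset> M" using SX X S_def by blast
  have US: "\<Union> (minimal_elems G) \<subseteq> S" using L2 assms(5) unfolding S_def I_def by blast
  have SnF: "S \<notin> F"
  proof
    assume "S \<in> F"
    moreover have "S \<subseteq> \<Inter> (maximal_elems G)" using SM assms(6) by blast
    ultimately show False using assms(7) US SM by blast
  qed
  have Ssub: "S \<subseteq> {1..n}" using SM assms(4) FP by blast
  have L5: "\<And>Z. Z \<in> G \<Longrightarrow> Z \<subseteq> S \<or> S \<subseteq> Z"
  proof -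
    fix Z assume Z: "Z \<in> G"
    show "Z \<subseteq> S \<or> S \<subseteq> Z"
    proof (cases "Z \<subseteq> M")
      case True
      show ?thesis
      proof (cases "Z = M")
        case True then show ?thesis using SM by blast
      next
        case False
        then have "Z \<subset> M" using \<open>Z \<subseteq> M\<close> by blast
        then have "\<forall>Y\<in>I. Z \<subseteq> Y" using L3 Z unfolding I_def by blast
        then show ?thesis using \<open>Z \<subseteq> M\<close> unfolding S_def by blast
      qed
    next
      case False
      then show ?thesis using Z SM unfolding S_def I_def by blast
    qed
  qed
  obtain B0 where B0: "B0 \<in> minimal_elems G" "B0 \<subseteq> X" using hasmin X by blast
  have B0S: "B0 \<subseteq> S" using US B0 by blast
  have L6: "\<And>W Z. W \<in> F \<Longrightarrow> W \<notin> G \<Longrightarrow> W \<noteq> {} \<Longrightarrow> W \<noteq> {1..n} \<Longrightarrow> Z \<in> G \<or> Z = S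
             \<Longrightarrow> \<not> W \<subseteq> Z \<and> \<not> Z \<subseteq> W"
  proof -
    fix W Z assume W: "W \<in> F" "W \<notin> G" "W \<noteq> {}" "W \<noteq> {1..n}" and Z: "Z \<in> G \<or> Z = S"
    have WP: "W \<in> P" using W Pdef by blast
    show "\<not> W \<subseteq> Z \<and> \<not> Z \<subseteq> W"
    proof (cases "Z \<in> G")
      case True then show ?thesis using conn[OF WP True] W by blast
    next
      case False
      then have "Z = S" using Z by blast
      then show ?thesis using conn[OF WP X(1)] conn[OF WP minG[OF B0(1)]] SX B0S W by blast
    qed
  qed
  have "induced_N (F \<union> {S})" using sat Ssub SnF by blast
  then obtain a b c d where abcd: "a \<in> F \<union> {S}" "b \<in> F \<union> {S}" "c \<in> F \<union> {S}" "d \<in> F \<union> {S}"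
      "a \<subset> c" "b \<subset> c" "b \<subset> d"
      "\<not> a \<subseteq> b" "\<not> b \<subseteq> a" "\<not> a \<subseteq> d" "\<not> d \<subseteq> a" "\<not> c \<subseteq> d" "\<not> d \<subseteq> c"
    unfolding induced_N_def by blast
  have Sin: "S = a \<or> S = b \<or> S = c \<or> S = d"
  proof (rule ccontr)
    assume "\<not> ?thesis"
    then have "a \<in> F" "b \<in> F" "c \<in> F" "d \<in> F" using abcd by auto
    then show False using noN[OF noNF _ _ _ _ abcd(5-)] by blast
  qed
  have sub1: "\<And>x. x \<in> F \<union> {S} \<Longrightarrow> x \<subseteq> {1..n}" using FP Ssub by blast
  have ne: "a \<noteq> {}" "b \<noteq> {}" "c \<noteq> {}" "d \<noteq> {}" using abcd by auto
  have sb: "a \<subseteq> {1..n}" "b \<subseteq> {1..n}" "c \<subseteq> {1..n}" "d \<subseteq> {1..n}"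
    using sub1 abcd(1-4) by auto
  have nf: "a \<noteq> {1..n}" "b \<noteq> {1..n}" "c \<noteq> {1..n}" "d \<noteq> {1..n}"
    using sb abcd(5-) by auto
  let ?Q = "\<lambda>x. x \<in> G \<or> x = S"
  have eqv: "\<And>x y. x \<in> F \<union> {S} \<Longrightarrow> y \<in> F \<union> {S} \<Longrightarrow> x \<noteq> {} \<Longrightarrow> x \<noteq> {1..n}
     \<Longrightarrow> y \<noteq> {} \<Longrightarrow> y \<noteq> {1..n} \<Longrightarrow> x \<subseteq> y \<Longrightarrow> ?Q x = ?Q y"
  proof -
    fix x y assume xy: "x \<in> F \<union> {S}" "y \<in> F \<union> {S}" "x \<noteq> {}" "x \<noteq> {1..n}"
      "y \<noteq> {}" "y \<noteq> {1..n}" "x \<subseteq> y"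
    show "?Q x = ?Q y"
    proof
      assume "?Q x"
      show "?Q y"
      proof (rule ccontr)
        assume "\<not> ?Q y"
        then show False using L6[of y x] xy \<open>?Q x\<close> by blast
      qed
    next
      assume "?Q y"
      show "?Q x"
      proof (rule ccontr)
        assume "\<not> ?Q x"
        then show False using L6[of x y] xy \<open>?Q y\<close> by blast
      qed
    qed
  qed
  have q1: "?Q a = ?Q c" using eqv[OF abcd(1,3)] ne nf abcd(5) by blast
  have q2: "?Q b = ?Q c" using eqv[OF abcd(2,3)] ne nf abcd(6) by blast
  have q3: "?Q b = ?Q d" using eqv[OF abcd(2,4)] ne nf abcd(7) by blast
  have allQ: "?Q a" "?Q b" "?Q c" "?Q d" using Sin q1 q2 q3 by blast+
  have cmp: "\<And>x. ?Q x \<Longrightarrow> x \<subseteq> S \<or> S \<subseteq> x" using L5 by blast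
  show False
    using Sin
  proof (elim disjE)
    assume "S = a" then show False using cmp[OF allQ(4)] abcd(10,11) by blast
  next
    assume "S = b" then show False using cmp[OF allQ(1)] abcd(8,9) by blast
  next
    assume "S = c" then show False using cmp[OF allQ(4)] abcd(12,13) by blast
  next
    assume "S = d" then show False using cmp[OF allQ(1)] abcd(10,11) by blast
  qed
qed

end
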